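(* Let $(r_n)$ be an increasing sequence of integers such that there is a continuous (non-atomic) finite positive Borel measure $\sigma$ on $\mathbb{T}=\mathbb{R}/\mathbb{Z}$ for which the sequence $(\hat\sigma(n))$, $\hat\sigma(n)=\int_{\mathbb{T}}e^{2\pi int}\,d\sigma(t)$, is not null along $(r_n)$. Then there exists a linear correlation, i.e. a sequence $a(n)=\int_Xf_0(T^{c_0n}x)\cdots f_k(T^{c_kn}x)\,d\mu(x)$ for some invertible measure preserving system $(X,\mu,T)$, $f_j\in L^\infty(\mu)$ and $c_j\in\mathbb{Z}$, whose null component is not null along $(r_n)$.
   Context: A bounded sequence $b$ is null along $(r_n)$ if $\frac1N\sum_{n=1}^N|b(r_n)|\to0$, and null if this holds for $r_n=n$. Nilsequences are uniform limits of sequences $n\mapsto f(\tau^nx)$ with $X=G/\Gamma$ a nilmanifold ($G$ nilpotent Lie group, $\Gamma$ discrete cocompact), $\tau\in G$, $x\in X$, $f\in C(X)$. Every linear correlation admits a unique decomposition as a nilsequence plus a null sequence; the null summand is its null component. *)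

theory Defs
  imports "HOL-Probability.Probability" "HOL-Algebra.Generated_Groups"
begin

fun lower_central :: "('g, 'b) monoid_scheme \<Rightarrow> nat \<Rightarrow> 'g set" where
  "lower_central G 0 = carrier G"
| "lower_central G (Suc i) =
     generate G {x \<otimes>\<^bsub>G\<^esub> y \<otimes>\<^bsub>G\<^esub> inv\<^bsub>G\<^esub> x \<otimes>\<^bsub>G\<^esub> inv\<^bsub>G\<^esub> y
                 | x y. x \<in> carrier G \<and> y \<in> lower_central G i}"

definition nilpotent_group :: "('g, 'b) monoid_scheme \<Rightarrow> bool" where
  "nilpotent_group G \<longleftrightarrow> group G \<and> (\<exists>s. lower_central G s = {\<one>\<^bsub>G\<^esub>})"

definition topological_group :: "('g, 'b) monoid_scheme \<Rightarrow> 'g topology \<Rightarrow> bool" where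
  "topological_group G TG \<longleftrightarrow> group G \<and> topspace TG = carrier G \<and>
     continuous_map (prod_topology TG TG) TG (\<lambda>(x, y). x \<otimes>\<^bsub>G\<^esub> y) \<and>
     continuous_map TG TG (\<lambda>x. inv\<^bsub>G\<^esub> x)"

definition topological_manifold :: "'g topology \<Rightarrow> nat \<Rightarrow> bool" where
  "topological_manifold TG d \<longleftrightarrow> Hausdorff_space TG \<and> second_countable TG \<and>
     (\<forall>g\<in>topspace TG. \<exists>U V. openin TG U \<and> g \<in> U \<and> openin (Euclidean_space d) V \<and>
        (subtopology TG U) homeomorphic_space (subtopology (Euclidean_space d) V))"

text \<open>Lie group: a topological group that is a topological manifold (by the solution of
  Hilbert's fifth problem such a group carries a unique compatible real-analytic structure).\<close>
definition lie_group :: "('g, 'b) monoid_scheme \<Rightarrow> 'g topology \<Rightarrow> bool" where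
  "lie_group G TG \<longleftrightarrow> topological_group G TG \<and> (\<exists>d. topological_manifold TG d)"

text \<open>Nilmanifold data: G nilpotent Lie group, \<Gamma> discrete cocompact subgroup.
  Cocompact: G = K \<Gamma> for a compact K (equivalently G/\<Gamma> compact).\<close>
definition nilmanifold_data :: "('g, 'b) monoid_scheme \<Rightarrow> 'g topology \<Rightarrow> 'g set \<Rightarrow> bool" where
  "nilmanifold_data G TG \<Gamma> \<longleftrightarrow> lie_group G TG \<and> nilpotent_group G \<and> subgroup \<Gamma> G \<and>
     subtopology TG \<Gamma> = discrete_topology \<Gamma> \<and>
     (\<exists>K. compactin TG K \<and> carrier G = (\<Union>k\<in>K. \<Union>\<gamma>\<in>\<Gamma>. {k \<otimes>\<^bsub>G\<^esub> \<gamma>}))"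

text \<open>A continuous
  function on G/\<Gamma> is represented by a continuous function F on G which is right
  \<Gamma>-invariant (the quotient topology on G/\<Gamma> written out), and \<tau> acts by left translation.
  The group is represented on a carrier inside the fixed type real (every second
  countable manifold has cardinality at most the continuum).\<close>
definition basic_nilsequence :: "(int \<Rightarrow> complex) \<Rightarrow> bool" where
  "basic_nilsequence u \<longleftrightarrow>
     (\<exists>(G :: real monoid) TG \<Gamma> F \<tau> g. nilmanifold_data G TG \<Gamma> \<and>
        continuous_map TG euclidean F \<and>
        (\<forall>h\<in>carrier G. \<forall>\<gamma>\<in>\<Gamma>. F (h \<otimes>\<^bsub>G\<^esub> \<gamma>) = F h) \<and>
        \<tau> \<in> carrier G \<and> g \<in> carrier G \<and>
        (\<forall>n::int. u n = F ((\<tau> [^]\<^bsub>G\<^esub> n) \<otimes>\<^bsub>G\<^esub> g)))"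

definition nilsequence :: "(int \<Rightarrow> complex) \<Rightarrow> bool" where
  "nilsequence b \<longleftrightarrow> (\<forall>\<epsilon>>0. \<exists>u. basic_nilsequence u \<and> (\<forall>n. norm (b n - u n) \<le> \<epsilon>))"

definition null_along :: "(nat \<Rightarrow> int) \<Rightarrow> (int \<Rightarrow> complex) \<Rightarrow> bool" where
  "null_along r b \<longleftrightarrow> (\<lambda>N. (\<Sum>n=1..N. norm (b (r n))) / real N) \<longlonglongrightarrow> 0"

definition null_seq :: "(int \<Rightarrow> complex) \<Rightarrow> bool" where
  "null_seq b \<longleftrightarrow> null_along int b"

definition null_component :: "(int \<Rightarrow> complex) \<Rightarrow> (int \<Rightarrow> complex) \<Rightarrow> bool" where
  "null_component a b \<longleftrightarrow> bounded (range b) \<and> null_seq b \<and> nilsequence (\<lambda>n. a n - b n)"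

definition invertible_mps :: "'x measure \<Rightarrow> ('x \<Rightarrow> 'x) \<Rightarrow> bool" where
  "invertible_mps \<mu> T \<longleftrightarrow> prob_space \<mu> \<and> bij_betw T (space \<mu>) (space \<mu>) \<and>
     T \<in> measurable \<mu> \<mu> \<and> inv_into (space \<mu>) T \<in> measurable \<mu> \<mu> \<and>
     (\<forall>A\<in>sets \<mu>. emeasure \<mu> (T -` A \<inter> space \<mu>) = emeasure \<mu> A)"

definition iterZ :: "'x measure \<Rightarrow> ('x \<Rightarrow> 'x) \<Rightarrow> int \<Rightarrow> 'x \<Rightarrow> 'x" where
  "iterZ \<mu> T k = (if k \<ge> 0 then T ^^ nat k else (inv_into (space \<mu>) T) ^^ nat (- k))"

definition Linfty :: "'x measure \<Rightarrow> ('x \<Rightarrow> complex) \<Rightarrow> bool" where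
  "Linfty \<mu> f \<longleftrightarrow> f \<in> borel_measurable \<mu> \<and> (\<exists>C. AE x in \<mu>. norm (f x) \<le> C)"

definition linear_correlation_of ::
  "'x measure \<Rightarrow> ('x \<Rightarrow> 'x) \<Rightarrow> nat \<Rightarrow> (nat \<Rightarrow> 'x \<Rightarrow> complex) \<Rightarrow> (nat \<Rightarrow> int) \<Rightarrow> int \<Rightarrow> complex" where
  "linear_correlation_of \<mu> T k f c n =
     integral\<^sup>L \<mu> (\<lambda>x. \<Prod>j\<le>k. f j (iterZ \<mu> T (c j * n) x))"

definition is_linear_correlation :: "'x itself \<Rightarrow> (int \<Rightarrow> complex) \<Rightarrow> bool" where
  "is_linear_correlation _ a \<longleftrightarrow>
     (\<exists>(\<mu> :: 'x measure) T k f c. invertible_mps \<mu> T \<and> (\<forall>j\<le>k. Linfty \<mu> (f j)) \<and>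
        a = linear_correlation_of \<mu> T k f c)"

text \<open>Finite positive Borel measures on T = R/Z, represented on [0,1).\<close>
definition circle_measure :: "real measure \<Rightarrow> bool" where
  "circle_measure \<sigma> \<longleftrightarrow> finite_measure \<sigma> \<and> sets \<sigma> = sets (restrict_space borel {0..<1})"

definition fourier_coeff :: "real measure \<Rightarrow> int \<Rightarrow> complex" where
  "fourier_coeff \<sigma> n = integral\<^sup>L \<sigma> (\<lambda>t. cis (2 * pi * of_int n * t))"

end

theory Submission
  imports Defs
begin


lemma basic_nil_zero: "basic_nilsequence (\<lambda>n. 0)"
proof -
  define G :: "real monoid" where "G = \<lparr>carrier = {0}, mult = (\<lambda>x y. 0), one = 0\<rparr>"
  define TG :: "real topology" where "TG = discrete_topology {0}"
  have c: "carrier G = {0}" by (simp add: G_def)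
  have one: "\<one>\<^bsub>G\<^esub> = 0" by (simp add: G_def)
  have m: "x \<otimes>\<^bsub>G\<^esub> y = 0" for x y by (simp add: G_def)
  have tsp: "topspace TG = {0}" by (simp add: TG_def)
  have grp: "group G"
    unfolding G_def by (rule groupI) auto
  have i: "inv\<^bsub>G\<^esub> x = 0" if "x \<in> carrier G" for x
  proof -
    have "inv\<^bsub>G\<^esub> x \<in> carrier G" using group.inv_closed[OF grp that] .
    then show ?thesis using c by blast
  qed
  have topg: "topological_group G TG"
  proof -
    have e: "(\<lambda>(x, y). x \<otimes>\<^bsub>G\<^esub> y) = (\<lambda>_. 0)" by (simp add: m case_prod_unfold)
    have 1: "continuous_map (prod_topology TG TG) TG (\<lambda>(x, y). x \<otimes>\<^bsub>G\<^esub> y)"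
      unfolding e by (simp add: tsp)
    have 2: "continuous_map TG TG (\<lambda>x. inv\<^bsub>G\<^esub> x)"
    proof (rule continuous_map_eq[of _ _ "\<lambda>_. 0"])
      show "continuous_map TG TG (\<lambda>_. 0)" by (simp add: tsp)
      fix x assume "x \<in> topspace TG"
      then have "x \<in> carrier G" by (simp add: tsp c)
      then show "0 = inv\<^bsub>G\<^esub> x" using i by metis
    qed
    show ?thesis unfolding topological_group_def using grp 1 2 tsp c by simp
  qed
  have hom: "subtopology TG {0} homeomorphic_space subtopology (Euclidean_space 0) (topspace (Euclidean_space 0))"
    unfolding homeomorphic_space_def homeomorphic_maps_def
  proof (intro exI conjI)
    show "continuous_map (subtopology TG {0}) (subtopology (Euclidean_space 0) (topspace (Euclidean_space 0))) (\<lambda>_. (\<lambda>_. 0))"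
      by (rule continuous_map_const[THEN iffD2]) (simp add: topspace_Euclidean_space)
    show "continuous_map (subtopology (Euclidean_space 0) (topspace (Euclidean_space 0))) (subtopology TG {0}) (\<lambda>_. 0)"
      by (rule continuous_map_const[THEN iffD2]) (simp add: tsp)
    show "\<forall>x\<in>topspace (subtopology TG {0}). 0 = x" by (simp add: tsp)
    show "\<forall>y\<in>topspace (subtopology (Euclidean_space 0) (topspace (Euclidean_space 0))). (\<lambda>_. 0) = y"
      by (auto simp: topspace_Euclidean_space)
  qed
  have man: "topological_manifold TG 0"
    unfolding topological_manifold_def
  proof (intro conjI ballI)
    show "Hausdorff_space TG" by (simp add: TG_def)
    show "second_countable TG" by (simp add: TG_def second_countable_discrete_topology)
    fix g assume "g \<in> topspace TG"
    then have g: "g = 0" by (simp add: tsp)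
    show "\<exists>U V. openin TG U \<and> g \<in> U \<and> openin (Euclidean_space 0) V \<and>
        subtopology TG U homeomorphic_space subtopology (Euclidean_space 0) V"
      by (rule exI[of _ "{0}"], rule exI[of _ "topspace (Euclidean_space 0)"])
         (use hom in \<open>simp add: g TG_def\<close>)
  qed
  have nil: "nilpotent_group G"
    unfolding nilpotent_group_def using grp c one
    by (intro conjI exI[of _ 0]) simp_all
  have sg: "subgroup {0} G"
    using group.subgroup_self[OF grp] c by simp
  have nd: "nilmanifold_data G TG {0}"
    unfolding nilmanifold_data_def lie_group_def
  proof (intro conjI exI)
    show "compactin TG {0}" by (simp add: TG_def)
    show "carrier G = (\<Union>k\<in>{0}. \<Union>\<gamma>\<in>{0}. {k \<otimes>\<^bsub>G\<^esub> \<gamma>})" by (simp add: c m)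
    show "subtopology TG {0} = discrete_topology {0}" by (simp add: TG_def)
  qed (use topg man nil sg in auto)
  have pw: "(\<tau> [^]\<^bsub>G\<^esub> (n::int)) \<otimes>\<^bsub>G\<^esub> 0 = 0" for \<tau> n
    by (simp add: m)
  show ?thesis
    unfolding basic_nilsequence_def
    apply (rule exI[of _ G], rule exI[of _ TG], rule exI[of _ "{0}"], rule exI[of _ "\<lambda>_. 0"],
           rule exI[of _ 0], rule exI[of _ 0])
    using nd c by (simp add: tsp)
qed

lemma nilsequence_zero: "nilsequence (\<lambda>n. 0)"
  unfolding nilsequence_def using basic_nil_zero by force



lemma circle_space: "circle_measure \<sigma> \<Longrightarrow> space \<sigma> = {0..<1}"
  unfolding circle_measure_def
  by (metis sets_eq_imp_space_eq space_restrict_space space_borel inf_top.right_neutral Int_commute)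

lemma circle_meas_id: "circle_measure \<sigma> \<Longrightarrow> (\<lambda>x. x) \<in> borel_measurable \<sigma>"
proof -
  assume C: "circle_measure \<sigma>"
  have "(\<lambda>x::real. x) \<in> borel_measurable (restrict_space borel {0..<1})"
    by (rule measurable_restrict_space1) simp
  then show ?thesis using C unfolding circle_measure_def
    using measurable_cong_sets by blast
qed

lemma cis_meas[measurable]: "(\<lambda>x. cis x) \<in> borel_measurable borel"
  by (intro borel_measurable_continuous_onI continuous_intros)

lemma avg_exp_tendsto:
  fixes x :: real
  assumes "x \<notin> \<int>"
  shows "(\<lambda>N. (\<Sum>n=1..N. cis (2 * pi * (real n * x))) / of_nat N) \<longlonglongrightarrow> 0"
proof -
  define z where "z = cis (2 * pi * x)"
  have z1: "z \<noteq> 1"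
  proof
    assume "z = 1"
    then have "cos (2 * pi * x) = 1" unfolding z_def
      by (metis Re_complex_of_real complex_of_real_def cis.sel(1) one_complex.sel(1))
    then obtain k :: int where "2 * pi * x = of_int k * 2 * pi"
      unfolding cos_one_2pi_int by blast
    then have "x = of_int k" by simp
    then show False using assms by simp
  qed
  have pw: "cis (2 * pi * (real n * x)) = z ^ n" for n
    unfolding z_def Complex.DeMoivre by (simp add: algebra_simps)
  have sum_eq: "(\<Sum>n=1..N. z ^ n) = z * ((z ^ N - 1) / (z - 1))" for N
  proof -
    have "(\<Sum>n=1..N. z ^ n) = (\<Sum>i<N. z ^ Suc i)"
      by (rule sum.reindex_bij_witness[of _ Suc "\<lambda>n. n - 1"]) auto
    also have "\<dots> = z * (\<Sum>i<N. z ^ i)" by (simp add: sum_distrib_left)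
    also have "\<dots> = z * ((z ^ N - 1) / (z - 1))" using geometric_sum[OF z1] by simp
    finally show ?thesis .
  qed
  have nz: "norm (z ^ N - 1) \<le> 2" for N
  proof -
    have "norm (z ^ N - 1) \<le> norm (z ^ N) + norm (1::complex)" by (rule norm_triangle_ineq4)
    also have "\<dots> = 2" by (simp add: z_def norm_power)
    finally show ?thesis .
  qed
  have bnd: "norm ((\<Sum>n=1..N. cis (2 * pi * (real n * x))) / of_nat N) \<le> (2 / norm (z - 1)) / real N" for N
  proof -
    have "norm (\<Sum>n=1..N. cis (2 * pi * (real n * x))) = norm (z * ((z ^ N - 1) / (z - 1)))"
      by (simp only: pw sum_eq)
    also have "\<dots> = norm (z ^ N - 1) / norm (z - 1)" by (simp add: z_def norm_mult norm_divide)
    also have "\<dots> \<le> 2 / norm (z - 1)" using nz z1 by (simp add: divide_right_mono)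
    finally have "norm (\<Sum>n=1..N. cis (2 * pi * (real n * x))) \<le> 2 / norm (z - 1)" .
    then have "norm (\<Sum>n=1..N. cis (2 * pi * (real n * x))) / real N \<le> (2 / norm (z - 1)) / real N"
      by (rule divide_right_mono) simp
    then show ?thesis by (simp add: norm_divide)
  qed
  show ?thesis
    by (rule Lim_null_comparison[OF always_eventually[OF allI[OF bnd]]]) (rule lim_const_over_n)
qed

lemma wiener_sq:
  assumes C: "circle_measure \<sigma>" and A: "\<forall>t\<in>space \<sigma>. emeasure \<sigma> {t} = 0"
  shows "(\<lambda>N. (\<Sum>n=1..N. (norm (fourier_coeff \<sigma> (int n)))\<^sup>2) / real N) \<longlonglongrightarrow> 0"
proof -
  interpret finite_measure \<sigma> using C unfolding circle_measure_def by auto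
  interpret P: pair_sigma_finite \<sigma> \<sigma> by unfold_locales
  interpret PF: finite_measure "\<sigma> \<Otimes>\<^sub>M \<sigma>"
    by (rule finite_measure_pair_measure) unfold_locales
  have [measurable]: "(\<lambda>x. x) \<in> borel_measurable \<sigma>" using circle_meas_id[OF C] .
  have sp: "space \<sigma> = {0..<1}" using circle_space[OF C] .
  define g where "g n p = cis (2 * pi * (real n * (fst p - snd p)))" for n :: nat and p :: "real \<times> real"
  have gm[measurable]: "g n \<in> borel_measurable (\<sigma> \<Otimes>\<^sub>M \<sigma>)" for n
    unfolding g_def by measurable
  have gi: "integrable (\<sigma> \<Otimes>\<^sub>M \<sigma>) (g n)" for n
    by (rule PF.integrable_const_bound[where B=1]) (auto simp: g_def)
  have sq: "complex_of_real ((norm (fourier_coeff \<sigma> (int n)))\<^sup>2) = integral\<^sup>L (\<sigma> \<Otimes>\<^sub>M \<sigma>) (g n)" for n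
  proof -
    have i1: "integrable (\<sigma> \<Otimes>\<^sub>M \<sigma>) (\<lambda>p. cis (2 * pi * real n * fst p) * cis (- (2 * pi * real n * snd p)))"
      by (rule PF.integrable_const_bound[where B=1]) (auto simp: norm_mult)
    have "complex_of_real ((norm (fourier_coeff \<sigma> (int n)))\<^sup>2) = fourier_coeff \<sigma> (int n) * cnj (fourier_coeff \<sigma> (int n))"
      by (rule complex_norm_square)
    also have "\<dots> = (\<integral>s. cis (2 * pi * real n * s) \<partial>\<sigma>) * (\<integral>t. cis (- (2 * pi * real n * t)) \<partial>\<sigma>)"
      unfolding fourier_coeff_def by (simp flip: cis_cnj)
    also have "\<dots> = (\<integral>s. (\<integral>t. cis (2 * pi * real n * s) * cis (- (2 * pi * real n * t)) \<partial>\<sigma>) \<partial>\<sigma>)"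
      by simp
    also have "\<dots> = (\<integral>p. cis (2 * pi * real n * fst p) * cis (- (2 * pi * real n * snd p)) \<partial>(\<sigma> \<Otimes>\<^sub>M \<sigma>))"
      using P.integral_fst'[OF i1] by simp
    also have "\<dots> = integral\<^sup>L (\<sigma> \<Otimes>\<^sub>M \<sigma>) (g n)"
      unfolding g_def by (intro Bochner_Integration.integral_cong refl) (simp add: cis_mult algebra_simps)
    finally show ?thesis .
  qed
  define K where "K N p = (\<Sum>n=1..N. g n p) / of_nat N" for N p
  have Km[measurable]: "K N \<in> borel_measurable (\<sigma> \<Otimes>\<^sub>M \<sigma>)" for N
    unfolding K_def by measurable
  have KI: "integral\<^sup>L (\<sigma> \<Otimes>\<^sub>M \<sigma>) (K N) = complex_of_real ((\<Sum>n=1..N. (norm (fourier_coeff \<sigma> (int n)))\<^sup>2) / real N)" for N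
  proof -
    have "integral\<^sup>L (\<sigma> \<Otimes>\<^sub>M \<sigma>) (K N) = (\<Sum>n=1..N. integral\<^sup>L (\<sigma> \<Otimes>\<^sub>M \<sigma>) (g n)) / of_nat N"
      unfolding K_def using gi by (simp add: integral_sum)
    also have "\<dots> = (\<Sum>n=1..N. complex_of_real ((norm (fourier_coeff \<sigma> (int n)))\<^sup>2)) / of_nat N"
      by (simp only: sq)
    also have "\<dots> = complex_of_real ((\<Sum>n=1..N. (norm (fourier_coeff \<sigma> (int n)))\<^sup>2) / real N)"
      by simp
    finally show ?thesis .
  qed
  define D where "D = {p \<in> space (\<sigma> \<Otimes>\<^sub>M \<sigma>). fst p = snd p}"
  have Dm: "D \<in> sets (\<sigma> \<Otimes>\<^sub>M \<sigma>)" unfolding D_def by measurable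
  have "emeasure (\<sigma> \<Otimes>\<^sub>M \<sigma>) D = (\<integral>\<^sup>+x. emeasure \<sigma> (Pair x -` D) \<partial>\<sigma>)"
    by (rule emeasure_pair_measure_alt[OF Dm])
  also have "\<dots> = (\<integral>\<^sup>+x. 0 \<partial>\<sigma>)"
  proof (rule nn_integral_cong)
    fix x assume x: "x \<in> space \<sigma>"
    have "Pair x -` D = {x}" using x by (auto simp: D_def space_pair_measure)
    then show "emeasure \<sigma> (Pair x -` D) = 0" using A x by simp
  qed
  finally have D0: "D \<in> null_sets (\<sigma> \<Otimes>\<^sub>M \<sigma>)" using Dm by (simp add: null_sets_def)
  have ae: "AE p in \<sigma> \<Otimes>\<^sub>M \<sigma>. fst p \<noteq> snd p"
    by (rule AE_I'[OF D0]) (auto simp: D_def)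
  have lim: "AE p in \<sigma> \<Otimes>\<^sub>M \<sigma>. (\<lambda>N. K N p) \<longlonglongrightarrow> 0"
    using ae
  proof (rule AE_mp[OF _ AE_I2[OF impI]])
    fix p assume p: "p \<in> space (\<sigma> \<Otimes>\<^sub>M \<sigma>)" "fst p \<noteq> snd p"
    then have "fst p \<in> {0..<1}" "snd p \<in> {0..<1}" by (auto simp: space_pair_measure sp)
    have "fst p - snd p \<notin> \<int>"
    proof
      assume "fst p - snd p \<in> \<int>"
      then obtain k where k: "fst p - snd p = of_int k" by (auto elim: Ints_cases)
      with \<open>fst p \<in> {0..<1}\<close> \<open>snd p \<in> {0..<1}\<close> have "k = 0" by auto
      with k p(2) show False by simp
    qed
    from avg_exp_tendsto[OF this]
    show "(\<lambda>N. K N p) \<longlonglongrightarrow> 0" unfolding K_def g_def .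
  qed
  have bound: "AE p in \<sigma> \<Otimes>\<^sub>M \<sigma>. norm (K N p) \<le> 1" for N
  proof (rule AE_I2)
    fix p
    have "norm (\<Sum>n=1..N. g n p) \<le> (\<Sum>n=1..N. norm (g n p))" by (rule norm_sum)
    also have "\<dots> = real N" by (simp add: g_def)
    finally have "norm (\<Sum>n=1..N. g n p) \<le> real N" .
    then show "norm (K N p) \<le> 1" unfolding K_def
      by (cases "N = 0") (auto simp: norm_divide divide_le_eq)
  qed
  have "(\<lambda>N. integral\<^sup>L (\<sigma> \<Otimes>\<^sub>M \<sigma>) (K N)) \<longlonglongrightarrow> integral\<^sup>L (\<sigma> \<Otimes>\<^sub>M \<sigma>) (\<lambda>_. 0::complex)"
    by (rule integral_dominated_convergence[where w="\<lambda>_. 1"]) (use lim bound in auto)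
  then have "(\<lambda>N. complex_of_real ((\<Sum>n=1..N. (norm (fourier_coeff \<sigma> (int n)))\<^sup>2) / real N)) \<longlonglongrightarrow> 0"
    by (simp add: KI)
  from tendsto_Re[OF this] show ?thesis by simp
qed



lemma frac_meas[measurable]: "(frac :: real \<Rightarrow> real) \<in> borel_measurable borel"
proof -
  have "(\<lambda>x::real. x - real_of_int \<lfloor>x\<rfloor>) \<in> borel_measurable borel" by measurable
  then show ?thesis by (simp add: frac_def[abs_def])
qed

lemma frac_frac_add: "frac (frac a + b) = frac (a + (b::real))"
proof -
  have e: "frac a + b = (a + b) + of_int (- \<lfloor>a\<rfloor>)" by (simp add: frac_def)
  show ?thesis by (simp only: e frac_add_of_int_right)
qed

lemma cis_frac: "cis (2 * pi * frac z) = cis (2 * pi * z)"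
proof -
  have "2 * pi * frac z = 2 * pi * z + 2 * pi * of_int (- \<lfloor>z\<rfloor>)" by (simp add: frac_def algebra_simps)
  then have "cis (2 * pi * frac z) = cis (2 * pi * z) * cis (2 * pi * of_int (- \<lfloor>z\<rfloor>))"
    by (simp add: cis_mult)
  also have "cis (2 * pi * of_int (- \<lfloor>z\<rfloor>)) = 1" by (rule cis_multiple_2pi) simp
  finally show ?thesis by simp
qed

lemma lborel_transl: "X \<in> sets borel \<Longrightarrow> emeasure lborel ((\<lambda>y. y + c) -` X) = emeasure lborel (X::real set)"
proof -
  assume X: "X \<in> sets borel"
  have "emeasure (distr lborel borel ((+) c)) X = emeasure lborel X" by (simp add: lborel_distr_plus)
  moreover have "emeasure (distr lborel borel ((+) c)) X = emeasure lborel ((+) c -` X \<inter> space lborel)"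
    by (rule emeasure_distr) (use X in auto)
  moreover have "(+) c -` X \<inter> space lborel = (\<lambda>y. y + c) -` X" by (auto simp: add.commute)
  ultimately show ?thesis by simp
qed

lemma rot_lborel:
  fixes B :: "real set" and s :: real
  assumes B: "B \<in> sets borel" "B \<subseteq> {0..<1}" and s: "0 \<le> s" "s < 1"
  shows "emeasure lborel {y\<in>{0..<1}. frac (y + s) \<in> B} = emeasure lborel B"
proof -
  have eq: "{y\<in>{0..<1}. frac (y + s) \<in> B} = ((\<lambda>y. y + s) -` (B \<inter> {s..<1})) \<union> ((\<lambda>y. y + (s - 1)) -` (B \<inter> {0..<s}))"
  proof (intro subset_antisym subsetI)
    fix y assume "y \<in> {y\<in>{0..<1}. frac (y + s) \<in> B}"
    then have y: "0 \<le> y" "y < 1" "frac (y + s) \<in> B" by auto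
    show "y \<in> ((\<lambda>y. y + s) -` (B \<inter> {s..<1})) \<union> ((\<lambda>y. y + (s - 1)) -` (B \<inter> {0..<s}))"
    proof (cases "y + s < 1")
      case True
      then have "frac (y + s) = y + s" using y s by (simp add: frac_eq)
      then show ?thesis using y True by auto
    next
      case False
      then have "frac (y + s) = y + s - 1"
        using y s frac_eq[of "y + s - 1"] frac_add_of_int_right[of "y + s - 1" 1] by simp
      then have h: "y + (s - 1) \<in> B" using y(3) by (metis add_diff_eq)
      then show ?thesis using y False s by auto
    qed
  next
    fix y assume "y \<in> ((\<lambda>y. y + s) -` (B \<inter> {s..<1})) \<union> ((\<lambda>y. y + (s - 1)) -` (B \<inter> {0..<s}))"
    then consider "y + s \<in> B" "s \<le> y + s" "y + s < 1" | "y + (s - 1) \<in> B" "0 \<le> y + (s - 1)" "y + (s - 1) < s"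
      by auto
    then show "y \<in> {y\<in>{0..<1}. frac (y + s) \<in> B}"
    proof cases
      case 1
      then have "frac (y + s) = y + s" using s by (simp add: frac_eq)
      then show ?thesis using 1 s by auto
    next
      case 2
      then have "frac (y + s) = y + s - 1"
        using s frac_eq[of "y + s - 1"] frac_add_of_int_right[of "y + s - 1" 1] by simp
      then have "frac (y + s) \<in> B" using 2(1) by (metis add_diff_eq)
      then show ?thesis using 2 s by auto
    qed
  qed
  have f1: "(\<lambda>y::real. y + s) \<in> borel_measurable borel" by measurable
  have f2: "(\<lambda>y::real. y + (s - 1)) \<in> borel_measurable borel" by measurable
  have m1: "(\<lambda>y. y + s) -` (B \<inter> {s..<1}) \<in> sets lborel"
    using measurable_sets[OF f1, of "B \<inter> {s..<1}"] B by simp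
  have m2: "(\<lambda>y. y + (s - 1)) -` (B \<inter> {0..<s}) \<in> sets lborel"
    using measurable_sets[OF f2, of "B \<inter> {0..<s}"] B by simp
  have disj: "((\<lambda>y. y + s) -` (B \<inter> {s..<1})) \<inter> ((\<lambda>y. y + (s - 1)) -` (B \<inter> {0..<s})) = {}"
    by auto
  have "emeasure lborel {y\<in>{0..<1}. frac (y + s) \<in> B}
      = emeasure lborel ((\<lambda>y. y + s) -` (B \<inter> {s..<1})) + emeasure lborel ((\<lambda>y. y + (s - 1)) -` (B \<inter> {0..<s}))"
    unfolding eq by (rule plus_emeasure[symmetric]) (use m1 m2 disj in auto)
  also have "\<dots> = emeasure lborel (B \<inter> {s..<1}) + emeasure lborel (B \<inter> {0..<s})"
    using B lborel_transl[of "B \<inter> {s..<1}" s] lborel_transl[of "B \<inter> {0..<s}" "s - 1"]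
    by (simp del: vimage_Int)
  also have "\<dots> = emeasure lborel ((B \<inter> {s..<1}) \<union> (B \<inter> {0..<s}))"
    by (rule plus_emeasure) (use B in auto)
  also have "(B \<inter> {s..<1}) \<union> (B \<inter> {0..<s}) = B" using B by auto
  finally show ?thesis .
qed

lemma rot_L0:
  fixes B :: "real set" and t :: real
  assumes B: "B \<in> sets (restrict_space lborel {0..<1})"
  shows "emeasure (restrict_space lborel {0..<1}) ((\<lambda>y. frac (y + t)) -` B \<inter> space (restrict_space lborel {0..<1}))
       = emeasure (restrict_space lborel {0..<1}) B"
proof -
  have Bb: "B \<in> sets borel" "B \<subseteq> {0..<1}" using B by (auto simp: sets_restrict_space_iff)
  have e: "(\<lambda>y. frac (y + t)) -` B \<inter> space (restrict_space lborel {0..<1}) = {y\<in>{0..<1}. frac (y + frac t) \<in> B}"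
  proof -
    have "frac (y + t) = frac (y + frac t)" for y
      using frac_frac_add[of t y] by (simp add: add.commute)
    then show ?thesis by auto
  qed
  have m: "{y\<in>{0..<1}. frac (y + frac t) \<in> B} \<in> sets borel" using Bb by measurable
  show ?thesis unfolding e
    apply (subst emeasure_restrict_space, simp, blast)
    apply (subst emeasure_restrict_space, simp, use Bb in simp)
    using rot_lborel[OF Bb, of "frac t"] by (simp add: frac_lt_1)
qed



locale circ =
  fixes \<sigma> :: "real measure"
  assumes C: "circle_measure \<sigma>" and pos: "0 < measure \<sigma> (space \<sigma>)"
begin

definition "m = measure \<sigma> (space \<sigma>)"
definition "L0 = restrict_space lborel {0..<1::real}"
definition "L = scale_measure (ennreal (1/m)) L0"
definition "M = \<sigma> \<Otimes>\<^sub>M L"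
definition \<phi> :: "real \<times> real \<Rightarrow> int \<Rightarrow> real" where
  "\<phi> p = (\<lambda>k. if k = 0 then fst p else if k = 1 then snd p else 0)"
definition "\<mu> = embed_measure M \<phi>"
definition T :: "(int \<Rightarrow> real) \<Rightarrow> int \<Rightarrow> real" where "T x = x(1 := frac (x 1 + x 0))"
definition R :: "int \<Rightarrow> real \<times> real \<Rightarrow> real \<times> real" where
  "R n p = (fst p, frac (snd p + of_int n * fst p))"

lemma mpos: "0 < m" using pos by (simp add: m_def)

lemma fin: "finite_measure \<sigma>" using C by (simp add: circle_measure_def)

lemma sp: "space \<sigma> = {0..<1}"
  using C unfolding circle_measure_def
  by (metis sets_eq_imp_space_eq space_restrict_space space_borel inf_top.right_neutral Int_commute)

lemma spL0: "space L0 = {0..<1}" by (simp add: L0_def)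
lemma spL: "space L = {0..<1}" by (simp add: L_def space_scale_measure spL0)
lemma setsL: "sets L = sets L0" by (simp add: L_def)

lemma id\<sigma>[measurable]: "(\<lambda>x. x) \<in> borel_measurable \<sigma>"
proof -
  have "(\<lambda>x::real. x) \<in> borel_measurable (restrict_space borel {0..<1})"
    by (rule measurable_restrict_space1) simp
  then show ?thesis using C unfolding circle_measure_def
    using measurable_cong_sets by blast
qed

lemma idL[measurable]: "(\<lambda>x. x) \<in> borel_measurable L"
proof -
  have "(\<lambda>x::real. x) \<in> borel_measurable lborel" by simp
  then have "(\<lambda>x::real. x) \<in> borel_measurable L0"
    unfolding L0_def by (rule measurable_restrict_space1)
  then show ?thesis using setsL measurable_cong_sets by blast
qed

lemma L0_space: "emeasure L0 {0..<1} = 1"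
  unfolding L0_def by (subst emeasure_restrict_space) auto

lemma L_space: "emeasure L (space L) = ennreal (1/m)"
  by (simp add: L_def space_scale_measure spL0 L0_space)

lemma finL: "finite_measure L"
  by (rule finite_measureI) (simp add: L_space)

lemma L_emeasure: "emeasure L A = ennreal (1/m) * emeasure L0 A"
  by (simp add: L_def)

sublocale sig: finite_measure \<sigma> by (rule fin)
sublocale Lf: finite_measure L by (rule finL)
sublocale PS: pair_sigma_finite \<sigma> L by unfold_locales

lemma spM: "space M = {0..<1} \<times> {0..<1}"
  by (simp add: M_def space_pair_measure sp spL)

lemma Rmeas: "R n \<in> measurable M M"
proof -
  have b: "(\<lambda>p. frac (snd p + of_int n * fst p)) \<in> borel_measurable M"
    unfolding M_def by measurable
  then have "(\<lambda>p. frac (snd p + of_int n * fst p)) \<in> measurable M lborel"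
    using measurable_cong_sets[OF refl sets_lborel[symmetric]] by blast
  then have "(\<lambda>p. frac (snd p + of_int n * fst p)) \<in> measurable M L0"
    unfolding L0_def by (rule measurable_restrict_space2[rotated]) (auto simp: frac_lt_1)
  then have s: "(\<lambda>p. frac (snd p + of_int n * fst p)) \<in> measurable M L"
    using measurable_cong_sets[OF refl setsL] by blast
  have f: "fst \<in> measurable M \<sigma>" unfolding M_def by simp
  have "(\<lambda>p. (fst p, frac (snd p + of_int n * fst p))) \<in> measurable M (\<sigma> \<Otimes>\<^sub>M L)"
    using f s by (rule measurable_Pair)
  then show ?thesis unfolding R_def M_def by simp
qed

lemma R_space: "p \<in> space M \<Longrightarrow> R n p \<in> space M"
  by (auto simp: R_def spM frac_lt_1)

lemma R_comp: "R a (R b p) = R (a + b) p"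
proof -
  have "frac (frac (snd p + of_int b * fst p) + of_int a * fst p) = frac (snd p + of_int (a + b) * fst p)"
    by (simp add: frac_frac_add algebra_simps)
  then show ?thesis by (simp add: R_def)
qed

lemma R0: "p \<in> space M \<Longrightarrow> R 0 p = p"
  by (cases p) (auto simp: R_def spM)

lemma inj\<phi>: "inj \<phi>"
proof (rule injI)
  fix p q assume "\<phi> p = \<phi> q"
  then have "\<phi> p 0 = \<phi> q 0" "\<phi> p 1 = \<phi> q 1" by auto
  then show "p = q" by (simp add: \<phi>_def prod_eq_iff)
qed

lemma T\<phi>: "T (\<phi> p) = \<phi> (R 1 p)"
  by (rule ext) (simp add: T_def \<phi>_def R_def)

lemma sp\<mu>: "space \<mu> = \<phi> ` space M" by (simp add: \<mu>_def space_embed_measure)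

lemma \<phi>meas: "\<phi> \<in> measurable M \<mu>"
  unfolding \<mu>_def by (rule measurable_embed_measure2[OF inj\<phi>])

lemma \<mu>_distr: "\<mu> = distr M \<mu> \<phi>"
  unfolding \<mu>_def by (rule embed_measure_eq_distr[OF inj\<phi>])

lemma Tmeas: "T \<in> measurable \<mu> \<mu>"
proof -
  have "(\<lambda>p. \<phi> (R 1 p)) \<in> measurable M \<mu>"
    by (rule measurable_compose[OF Rmeas \<phi>meas])
  then have "(\<lambda>p. T (\<phi> p)) \<in> measurable M \<mu>" by (simp add: T\<phi>)
  then have "(\<lambda>p. T (\<phi> p)) \<in> measurable M (embed_measure M \<phi>)" by (simp add: \<mu>_def)
  then show ?thesis unfolding \<mu>_def by (rule measurable_embed_measure1[of T \<phi> M "embed_measure M \<phi>"])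
qed

lemma distr_R: "distr M M (R 1) = M"
proof (rule measure_eqI)
  show "sets (distr M M (R 1)) = sets M" by simp
  fix A assume "A \<in> sets (distr M M (R 1))"
  then have A: "A \<in> sets M" by simp
  have pre: "R 1 -` A \<inter> space M \<in> sets M" by (rule measurable_sets[OF Rmeas A])
  have "emeasure (distr M M (R 1)) A = emeasure M (R 1 -` A \<inter> space M)"
    by (rule emeasure_distr[OF Rmeas A])
  also have "\<dots> = (\<integral>\<^sup>+t. emeasure L (Pair t -` (R 1 -` A \<inter> space M)) \<partial>\<sigma>)"
    unfolding M_def by (rule Lf.emeasure_pair_measure_alt) (use pre in \<open>simp add: M_def\<close>)
  also have "\<dots> = (\<integral>\<^sup>+t. emeasure L (Pair t -` A) \<partial>\<sigma>)"
  proof (rule nn_integral_cong)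
    fix t assume t: "t \<in> space \<sigma>"
    have AL: "Pair t -` A \<in> sets L0"
      using sets_Pair1[of A \<sigma> L t] A setsL by (simp add: M_def)
    have e: "Pair t -` (R 1 -` A \<inter> space M) = (\<lambda>y. frac (y + t)) -` (Pair t -` A) \<inter> space L0"
      using t by (auto simp: R_def spM sp spL0)
    have "emeasure L (Pair t -` (R 1 -` A \<inter> space M)) = ennreal (1/m) * emeasure L0 ((\<lambda>y. frac (y + t)) -` (Pair t -` A) \<inter> space L0)"
      by (simp only: e L_emeasure)
    also have "\<dots> = ennreal (1/m) * emeasure L0 (Pair t -` A)"
      using rot_L0[of "Pair t -` A" t] AL by (simp add: L0_def)
    also have "\<dots> = emeasure L (Pair t -` A)" by (simp add: L_emeasure)
    finally show "emeasure L (Pair t -` (R 1 -` A \<inter> space M)) = emeasure L (Pair t -` A)" .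
  qed
  also have "\<dots> = emeasure M A"
    unfolding M_def by (rule Lf.emeasure_pair_measure_alt[symmetric]) (use A in \<open>simp add: M_def\<close>)
  finally show "emeasure (distr M M (R 1)) A = emeasure M A" .
qed

lemma T_distr: "distr \<mu> \<mu> T = \<mu>"
proof -
  have "distr \<mu> \<mu> T = distr (distr M \<mu> \<phi>) \<mu> T" by (subst (1) \<mu>_distr) simp
  also have "\<dots> = distr M \<mu> (T \<circ> \<phi>)" by (rule distr_distr[OF Tmeas \<phi>meas])
  also have "\<dots> = distr M \<mu> (\<phi> \<circ> R 1)" by (rule distr_cong) (auto simp: T\<phi>)
  also have "\<dots> = distr (distr M M (R 1)) \<mu> \<phi>" by (rule distr_distr[OF \<phi>meas Rmeas, symmetric])
  also have "\<dots> = distr M \<mu> \<phi>" by (simp only: distr_R)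
  also have "\<dots> = \<mu>" by (rule \<mu>_distr[symmetric])
  finally show ?thesis .
qed

lemma T_pres: "A \<in> sets \<mu> \<Longrightarrow> emeasure \<mu> (T -` A \<inter> space \<mu>) = emeasure \<mu> A"
  using emeasure_distr[OF Tmeas, of A] T_distr by simp

lemma M_space: "emeasure M (space M) = 1"
proof -
  have "emeasure M (space M) = emeasure \<sigma> (space \<sigma>) * emeasure L (space L)"
    unfolding M_def space_pair_measure by (rule Lf.emeasure_pair_measure_Times) auto
  also have "\<dots> = ennreal m * ennreal (1/m)" by (simp add: L_space sig.emeasure_eq_measure m_def)
  also have "\<dots> = 1" using mpos by (simp flip: ennreal_mult)
  finally show ?thesis .
qed

lemma prob\<mu>: "prob_space \<mu>"
proof (rule prob_spaceI)
  have "emeasure \<mu> (space \<mu>) = emeasure M (\<phi> -` space \<mu> \<inter> space M)"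
    unfolding \<mu>_def by (rule emeasure_embed_measure[OF inj\<phi>]) simp
  also have "\<phi> -` space \<mu> \<inter> space M = space M" by (auto simp: sp\<mu>)
  finally show "emeasure \<mu> (space \<mu>) = 1" using M_space by simp
qed

lemma injT: "inj_on T (space \<mu>)"
proof (rule inj_onI)
  fix x y assume x: "x \<in> space \<mu>" and y: "y \<in> space \<mu>" and e: "T x = T y"
  obtain p where p: "p \<in> space M" "x = \<phi> p" using x sp\<mu> by auto
  obtain q where q: "q \<in> space M" "y = \<phi> q" using y sp\<mu> by auto
  have "\<phi> (R 1 p) = \<phi> (R 1 q)" using e p q by (simp add: T\<phi>)
  then have "R 1 p = R 1 q" using inj\<phi> by (simp add: inj_eq)
  then have "R (-1) (R 1 p) = R (-1) (R 1 q)" by simp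
  then have "p = q" using p q by (simp add: R_comp R0)
  then show "x = y" using p q by simp
qed

lemma Tinv: "q \<in> space M \<Longrightarrow> inv_into (space \<mu>) T (\<phi> q) = \<phi> (R (-1) q)"
proof (rule inv_into_f_eq[OF injT])
  assume q: "q \<in> space M"
  show "\<phi> (R (-1) q) \<in> space \<mu>" using R_space[OF q] by (simp add: sp\<mu>)
  show "T (\<phi> (R (-1) q)) = \<phi> q" using q by (simp add: T\<phi> R_comp R0)
qed

lemma bijT: "bij_betw T (space \<mu>) (space \<mu>)"
  unfolding bij_betw_def
proof
  show "inj_on T (space \<mu>)" by (rule injT)
  show "T ` space \<mu> = space \<mu>"
  proof (intro subset_antisym subsetI)
    fix x assume "x \<in> T ` space \<mu>"
    then obtain p where "p \<in> space M" "x = T (\<phi> p)" by (auto simp: sp\<mu>)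
    then show "x \<in> space \<mu>" using R_space by (auto simp: T\<phi> sp\<mu>)
  next
    fix x assume "x \<in> space \<mu>"
    then obtain q where q: "q \<in> space M" "x = \<phi> q" by (auto simp: sp\<mu>)
    then have "x = T (\<phi> (R (-1) q))" by (simp add: T\<phi> R_comp R0)
    moreover have "\<phi> (R (-1) q) \<in> space \<mu>" using R_space[OF q(1)] by (simp add: sp\<mu>)
    ultimately show "x \<in> T ` space \<mu>" by blast
  qed
qed

lemma Tinv_meas: "inv_into (space \<mu>) T \<in> measurable \<mu> \<mu>"
proof -
  have "(\<lambda>p. \<phi> (R (-1) p)) \<in> measurable M \<mu>"
    by (rule measurable_compose[OF Rmeas \<phi>meas])
  then have "(\<lambda>p. inv_into (space \<mu>) T (\<phi> p)) \<in> measurable M \<mu>"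
    by (rule measurable_cong[THEN iffD1, rotated]) (simp add: Tinv)
  then have "(\<lambda>p. inv_into (space \<mu>) T (\<phi> p)) \<in> measurable M (embed_measure M \<phi>)" by (simp add: \<mu>_def)
  then show ?thesis unfolding \<mu>_def
    by (rule measurable_embed_measure1[of "inv_into (space \<mu>) T" \<phi> M "embed_measure M \<phi>", simplified \<mu>_def])
qed

lemma mps: "invertible_mps \<mu> T"
  unfolding invertible_mps_def using prob\<mu> bijT Tmeas Tinv_meas T_pres by blast

lemma iter_pos: "p \<in> space M \<Longrightarrow> (T ^^ k) (\<phi> p) = \<phi> (R (int k) p)"
proof (induction k)
  case 0
  then show ?case by (simp add: R0)
next
  case (Suc k)
  then show ?case by (simp add: T\<phi> R_comp add.commute)
qed

lemma iter_neg: "p \<in> space M \<Longrightarrow> (inv_into (space \<mu>) T ^^ k) (\<phi> p) = \<phi> (R (- int k) p)"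
proof (induction k)
  case 0
  then show ?case by (simp add: R0)
next
  case (Suc k)
  have "R (- int k) p \<in> space M" using R_space Suc.prems by blast
  then show ?case using Suc by (simp add: Tinv R_comp)
qed

lemma iterZ_eq: "p \<in> space M \<Longrightarrow> iterZ \<mu> T n (\<phi> p) = \<phi> (R n p)"
  by (cases "n \<ge> 0") (simp_all add: iterZ_def iter_pos iter_neg)

definition fF :: "nat \<Rightarrow> (int \<Rightarrow> real) \<Rightarrow> complex" where
  "fF j x = (if j = 0 then cis (- (2 * pi * x 1)) else cis (2 * pi * x 1))"
definition cc :: "nat \<Rightarrow> int" where "cc j = (if j = 0 then 0 else 1)"

lemma cis_meas2[measurable]: "(\<lambda>x. cis x) \<in> borel_measurable borel"
  by (intro borel_measurable_continuous_onI continuous_intros)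

lemma \<phi>1: "\<phi> p 1 = snd p" by (simp add: \<phi>_def)

lemma Linf: "Linfty \<mu> (fF j)"
  unfolding Linfty_def
proof
  have a: "(\<lambda>p. cis (2 * pi * snd p)) \<in> borel_measurable M"
    unfolding M_def by measurable
  have b: "(\<lambda>p. cis (- (2 * pi * snd p))) \<in> borel_measurable M"
    unfolding M_def by measurable
  have "(\<lambda>p. if j = 0 then cis (- (2 * pi * snd p)) else cis (2 * pi * snd p)) \<in> borel_measurable M"
    using a b by (cases "j = 0") simp_all
  moreover have "(\<lambda>p. fF j (\<phi> p)) = (\<lambda>p. if j = 0 then cis (- (2 * pi * snd p)) else cis (2 * pi * snd p))"
    by (rule ext) (simp add: fF_def \<phi>1)
  ultimately have "(\<lambda>p. fF j (\<phi> p)) \<in> borel_measurable M"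
    by simp
  then show "fF j \<in> borel_measurable \<mu>" unfolding \<mu>_def
    by (rule measurable_embed_measure1[of "fF j" \<phi> M borel])
  show "\<exists>C. AE x in \<mu>. norm (fF j x) \<le> C"
    by (rule exI[of _ 1], rule AE_I2) (simp add: fF_def)
qed

lemma h_eq: "p \<in> space M \<Longrightarrow> (\<Prod>j\<le>1. fF j (iterZ \<mu> T (cc j * n) (\<phi> p))) = cis (2 * pi * of_int n * fst p)"
proof -
  assume p: "p \<in> space M"
  have s: "{..1::nat} = {0, 1}" by auto
  have "(\<Prod>j\<le>1. fF j (iterZ \<mu> T (cc j * n) (\<phi> p))) = fF 0 (\<phi> (R 0 p)) * fF 1 (\<phi> (R n p))"
    using p by (simp add: s cc_def iterZ_eq)
  also have "\<dots> = cis (- (2 * pi * snd p)) * cis (2 * pi * frac (snd p + of_int n * fst p))"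
  proof -
    have "snd p \<in> {0..<1}" using p by (auto simp: spM)
    then show ?thesis using p by (simp add: fF_def \<phi>1 R0 R_def)
  qed
  also have "\<dots> = cis (- (2 * pi * snd p)) * cis (2 * pi * (snd p + of_int n * fst p))"
    by (simp only: cis_frac)
  also have "\<dots> = cis (2 * pi * of_int n * fst p)"
    by (simp add: cis_mult algebra_simps)
  finally show ?thesis .
qed

lemma corr: "linear_correlation_of \<mu> T 1 fF cc n = fourier_coeff \<sigma> n / complex_of_real m"
proof -
  define h where "h x = (\<Prod>j\<le>1. fF j (iterZ \<mu> T (cc j * n) x))" for x
  have hp: "p \<in> space M \<Longrightarrow> h (\<phi> p) = cis (2 * pi * of_int n * fst p)" for p
    unfolding h_def by (rule h_eq)
  have g: "(\<lambda>p. cis (2 * pi * of_int n * fst p)) \<in> borel_measurable M"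
    unfolding M_def by measurable
  have "(\<lambda>p. h (\<phi> p)) \<in> borel_measurable M"
    by (rule measurable_cong[THEN iffD1, OF _ g]) (simp add: hp)
  then have hm: "h \<in> borel_measurable \<mu>" unfolding \<mu>_def
    by (rule measurable_embed_measure1[of h \<phi> M borel])
  interpret MF: finite_measure M unfolding M_def
    by (rule finite_measure_pair_measure) (rule finL, rule fin)
  have gi: "integrable (\<sigma> \<Otimes>\<^sub>M L) (\<lambda>p. cis (2 * pi * of_int n * fst p))"
    using MF.integrable_const_bound[where B=1, OF _ g] by (simp add: M_def)
  have mL: "measure L (space L) = 1/m"
  proof -
    have "ennreal (measure L (space L)) = ennreal (1/m)" using L_space Lf.emeasure_eq_measure by simp
    then show ?thesis using mpos by (simp add: ennreal_inj)
  qed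
  have "linear_correlation_of \<mu> T 1 fF cc n = integral\<^sup>L \<mu> h"
    unfolding linear_correlation_of_def h_def ..
  also have "\<dots> = integral\<^sup>L (distr M \<mu> \<phi>) h" by (subst (1) \<mu>_distr) simp
  also have "\<dots> = (\<integral>p. h (\<phi> p) \<partial>M)" by (rule integral_distr[OF \<phi>meas hm])
  also have "\<dots> = (\<integral>p. cis (2 * pi * of_int n * fst p) \<partial>M)"
    by (rule Bochner_Integration.integral_cong) (simp_all add: hp)
  also have "\<dots> = (\<integral>t. (\<integral>y. cis (2 * pi * of_int n * fst (t, y)) \<partial>L) \<partial>\<sigma>)"
    unfolding M_def by (rule PS.integral_fst'[OF gi, symmetric])
  also have "\<dots> = (\<integral>t. complex_of_real (1/m) * cis (2 * pi * of_int n * t) \<partial>\<sigma>)"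
    by (simp add: mL scaleR_conv_of_real)
  also have "\<dots> = complex_of_real (1/m) * fourier_coeff \<sigma> n"
    by (simp add: fourier_coeff_def)
  also have "\<dots> = fourier_coeff \<sigma> n / complex_of_real m" by (simp add: field_simps)
  finally show ?thesis .
qed

lemma is_corr: "is_linear_correlation TYPE(int \<Rightarrow> real) (\<lambda>n. fourier_coeff \<sigma> n / complex_of_real m)"
  unfolding is_linear_correlation_def
  apply (rule exI[of _ \<mu>], rule exI[of _ T], rule exI[of _ 1], rule exI[of _ fF], rule exI[of _ cc])
  using mps Linf corr by (auto simp: fun_eq_iff)

lemma is_corr': "is_linear_correlation TYPE(int \<Rightarrow> real) (\<lambda>n. fourier_coeff \<sigma> n / complex_of_real (measure \<sigma> (space \<sigma>)))"
  using is_corr by (simp add: m_def)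

end



lemma avg_from_sq:
  fixes a :: "nat \<Rightarrow> real"
  assumes nn: "\<And>n. 0 \<le> a n"
    and sq: "(\<lambda>N. (\<Sum>n=1..N. (a n)\<^sup>2) / real N) \<longlonglongrightarrow> 0"
  shows "(\<lambda>N. (\<Sum>n=1..N. a n) / real N) \<longlonglongrightarrow> 0"
proof (rule Lim_null_comparison[OF always_eventually[OF allI]])
  fix N
  have cs: "(\<Sum>n=1..N. a n)\<^sup>2 \<le> (\<Sum>n=1..N. (a n)\<^sup>2) * real N"
    using sum_squared_le_sum_of_squares[of a "{1..N}"] by simp
  have x0: "0 \<le> (\<Sum>n=1..N. a n) / real N" using nn by (simp add: sum_nonneg)
  have "((\<Sum>n=1..N. a n) / real N)\<^sup>2 \<le> (\<Sum>n=1..N. (a n)\<^sup>2) / real N"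
  proof (cases "N = 0")
    case False
    then have "((\<Sum>n=1..N. a n) / real N)\<^sup>2 = (\<Sum>n=1..N. a n)\<^sup>2 / (real N * real N)"
      by (simp add: power_divide power2_eq_square)
    also have "\<dots> \<le> ((\<Sum>n=1..N. (a n)\<^sup>2) * real N) / (real N * real N)"
      by (rule divide_right_mono[OF cs]) simp
    also have "\<dots> = (\<Sum>n=1..N. (a n)\<^sup>2) / real N" using False by simp
    finally show ?thesis .
  qed simp
  then have "(\<Sum>n=1..N. a n) / real N \<le> sqrt ((\<Sum>n=1..N. (a n)\<^sup>2) / real N)"
    by (rule real_le_rsqrt)
  then show "norm ((\<Sum>n=1..N. a n) / real N) \<le> sqrt ((\<Sum>n=1..N. (a n)\<^sup>2) / real N)"
    using x0 by simp
next
  show "(\<lambda>N. sqrt ((\<Sum>n=1..N. (a n)\<^sup>2) / real N)) \<longlonglongrightarrow> 0"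
    using tendsto_real_sqrt[OF sq] by simp
qed

lemma null_along_scale:
  fixes c :: real
  assumes "null_along r b"
  shows "null_along r (\<lambda>n. b n * complex_of_real c)"
proof -
  have "(\<lambda>N. \<bar>c\<bar> * ((\<Sum>n=1..N. norm (b (r n))) / real N)) \<longlonglongrightarrow> \<bar>c\<bar> * 0"
    using assms unfolding null_along_def by (intro tendsto_mult tendsto_const)
  moreover have e: "(\<Sum>n=1..N. norm (b (r n) * complex_of_real c)) / real N = \<bar>c\<bar> * ((\<Sum>n=1..N. norm (b (r n))) / real N)" for N
  proof -
    have "(\<Sum>n=1..N. norm (b (r n) * complex_of_real c)) = (\<Sum>n=1..N. \<bar>c\<bar> * norm (b (r n)))"
      by (rule sum.cong) (simp_all add: norm_mult mult.commute)
    also have "\<dots> = \<bar>c\<bar> * (\<Sum>n=1..N. norm (b (r n)))" by (simp add: sum_distrib_left)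
    finally show ?thesis by simp
  qed
  ultimately show ?thesis unfolding null_along_def by (simp only: e mult_zero_right)
qed

theorem proposition6p1:
  fixes r :: "nat \<Rightarrow> int" and \<sigma> :: "real measure"
  assumes "strict_mono r"
    and "circle_measure \<sigma>"
    and "\<forall>t \<in> space \<sigma>. emeasure \<sigma> {t} = 0"
    and "\<not> null_along r (fourier_coeff \<sigma>)"
  shows "\<exists>a b. is_linear_correlation TYPE(int \<Rightarrow> real) a \<and> null_component a b \<and> \<not> null_along r b"
proof -
  note C = assms(2)
  interpret finite_measure \<sigma> using C by (simp add: circle_measure_def)
  define mm where "mm = measure \<sigma> (space \<sigma>)"
  have fcb: "norm (fourier_coeff \<sigma> n) \<le> mm" for n
  proof -
    have "norm (fourier_coeff \<sigma> n) \<le> (\<integral>t. norm (cis (2 * pi * of_int n * t)) \<partial>\<sigma>)"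
      unfolding fourier_coeff_def by (rule integral_norm_bound)
    also have "\<dots> = mm" by (simp add: mm_def)
    finally show ?thesis .
  qed
  have m0: "0 \<le> mm" by (simp add: mm_def)
  have mmpos: "0 < mm"
  proof (rule ccontr)
    assume "\<not> 0 < mm"
    then have "mm = 0" using m0 by simp
    then have "fourier_coeff \<sigma> n = 0" for n using fcb[of n] by simp
    then have "null_along r (fourier_coeff \<sigma>)" by (simp add: null_along_def)
    then show False using assms(4) by simp
  qed
  interpret circ \<sigma> by unfold_locales (use C mmpos in \<open>simp_all add: mm_def\<close>)
  define a where "a n = fourier_coeff \<sigma> n / complex_of_real mm" for n
  have corr: "is_linear_correlation TYPE(int \<Rightarrow> real) a"
  proof -
    have "a = (\<lambda>n. fourier_coeff \<sigma> n / complex_of_real (measure \<sigma> (space \<sigma>)))"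
      by (simp add: a_def mm_def fun_eq_iff)
    then show ?thesis using is_corr' by simp
  qed
  have bnd: "bounded (range a)"
    unfolding bounded_iff
    by (rule exI[of _ 1]) (use fcb mmpos in \<open>auto simp: a_def norm_divide divide_le_eq\<close>)
  have fc_avg: "(\<lambda>N. (\<Sum>n=1..N. norm (fourier_coeff \<sigma> (int n))) / real N) \<longlonglongrightarrow> 0"
    by (rule avg_from_sq) (use wiener_sq[OF C assms(3)] in auto)
  have "null_along int (\<lambda>n. fourier_coeff \<sigma> n * complex_of_real (1/mm))"
    by (rule null_along_scale) (use fc_avg in \<open>simp add: null_along_def\<close>)
  then have nulla: "null_seq a" unfolding null_seq_def a_def by (simp add: divide_inverse)
  have nil: "nilsequence (\<lambda>n. a n - a n)" using nilsequence_zero by simp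
  have notnull: "\<not> null_along r a"
  proof
    assume "null_along r a"
    then have "null_along r (\<lambda>n. a n * complex_of_real mm)" by (rule null_along_scale)
    moreover have "(\<lambda>n. a n * complex_of_real mm) = fourier_coeff \<sigma>"
      using mmpos by (auto simp: a_def fun_eq_iff)
    ultimately show False using assms(4) by simp
  qed
  show ?thesis
    using corr bnd nulla nil notnull unfolding null_component_def by blast
qed


end
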